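(* Let $\mathcal{I}=\{(i\mid A_i): i\in[m]\}$ be an index coding instance with $|A|_{\min}=\min_i|A_i|$, and let $\boldsymbol{G}\in\{0,1\}^{r\times m}$ be the binary matrix obtained at the end of any execution of the UMCD algorithm on $\mathcal{I}$, with row supports $G_j=\{i: g_{j,i}=1\}$. Then $\boldsymbol{G}$ satisfies the linear code condition with $d=|A|_{\min}+1$, i.e. $\bigl|\bigcup_{j\in K}G_j\bigr|\ge |A|_{\min}+|K|$ for every nonempty $K\subseteq[r]$.
   Context: $B_i=[m]\setminus(A_i\cup\{i\})$. For a $0/1$ matrix $\boldsymbol{G}$, $\boldsymbol{G}_{[k]}^{L}$ is the submatrix of the first $k$ rows and columns $L$; $\mathrm{mcm}(\boldsymbol{G})$ is the maximum number of $1$-entries no two in a common row or column (0 if no columns). UMCD algorithm: $N=[m]$, $k=0$; while $N\ne\emptyset$: $k\leftarrow k+1$; pick $w\in N$ with $|A_w|$ minimal over $N$ (arbitrary tie-breaking); set row $k$ of $\boldsymbol{G}$ to the indicator vector of $\{w\}\cup A_w$; remove $w$ from $N$; remove from $N$ every $i$ with $\mathrm{mcm}(\boldsymbol{G}_{[k]}^{\{i\}\cup B_i})=\mathrm{mcm}(\boldsymbol{G}_{[k]}^{B_i})+1$. The final matrix has $r$ rows, $r$ being the final value of $k$. *)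

theory Defs
  imports Main
begin

definition ic_instance :: "nat \<Rightarrow> (nat \<Rightarrow> nat set) \<Rightarrow> bool" where
  "ic_instance m A \<longleftrightarrow> (\<forall>i\<in>{1..m}. A i \<subseteq> {1..m} - {i})"

definition Bset :: "nat \<Rightarrow> (nat \<Rightarrow> nat set) \<Rightarrow> nat \<Rightarrow> nat set" where
  "Bset m A i = {1..m} - (A i \<union> {i})"

definition Amin :: "nat \<Rightarrow> (nat \<Rightarrow> nat set) \<Rightarrow> nat" where
  "Amin m A = Min ((\<lambda>i. card (A i)) ` {1..m})"

text \<open>A 0/1 matrix is represented by the list of its row supports:
  row j (1-based) has support G ! (j-1).  Entry (j,c) is 1 iff c \<in> G ! (j-1).\<close>

definition mcm :: "nat set list \<Rightarrow> nat set \<Rightarrow> nat" where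
  "mcm G L = Max {card M | M. M \<subseteq> {(j, c). j \<in> {1..length G} \<and> c \<in> L \<and> c \<in> G ! (j - 1)}
                              \<and> inj_on fst M \<and> inj_on snd M}"

inductive umcd_step :: "nat \<Rightarrow> (nat \<Rightarrow> nat set) \<Rightarrow> nat set \<times> nat set list \<Rightarrow> nat set \<times> nat set list \<Rightarrow> bool"
  for m A where
  "\<lbrakk> N \<noteq> {}; w \<in> N; \<forall>v\<in>N. card (A w) \<le> card (A v);
     G' = G @ [insert w (A w)];
     N' = {i \<in> N - {w}. \<not> (mcm G' (insert i (Bset m A i)) = mcm G' (Bset m A i) + 1)} \<rbrakk>
   \<Longrightarrow> umcd_step m A (N, G) (N', G')"

definition umcd_output :: "nat \<Rightarrow> (nat \<Rightarrow> nat set) \<Rightarrow> nat set list \<Rightarrow> bool" where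
  "umcd_output m A G \<longleftrightarrow> (umcd_step m A)\<^sup>*\<^sup>* ({1..m}, []) ({}, G)"

end

theory Submission
  imports Defs
begin

lemma hall:
  assumes "finite X" "\<forall>x\<in>X. finite (S x)"
    and "\<forall>K\<subseteq>X. card K \<le> card (\<Union>(S ` K))"
  shows "\<exists>f. inj_on f X \<and> (\<forall>x\<in>X. f x \<in> S x)"
  using assms
proof (induction "card X" arbitrary: X S rule: less_induct)
  case less
  show ?case
  proof (cases "X = {}")
    case True then show ?thesis by auto
  next
    case Xne: False
    show ?thesis
    proof (cases "\<exists>K. K \<subseteq> X \<and> K \<noteq> {} \<and> K \<noteq> X \<and> card (\<Union>(S ` K)) \<le> card K")
      case True
      then obtain K where K: "K \<subseteq> X" "K \<noteq> {}" "K \<noteq> X" "card (\<Union>(S ` K)) \<le> card K" by blast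
      have fK: "finite K" using K(1) less.prems(1) finite_subset by blast
      have cK: "card K < card X" using K less.prems(1) by (meson psubsetI psubset_card_mono)
      have h1: "\<forall>x\<in>K. finite (S x)" using less.prems(2) K(1) by blast
      have h2: "\<forall>L\<subseteq>K. card L \<le> card (\<Union>(S ` L))"
      proof (intro allI impI)
        fix L assume "L \<subseteq> K"
        then have "L \<subseteq> X" using K(1) by blast
        then show "card L \<le> card (\<Union>(S ` L))" using less.prems(3) by blast
      qed
      obtain g where g: "inj_on g K" "\<forall>x\<in>K. g x \<in> S x"
        using less.hyps[OF cK fK h1 h2] by blast
      define U where "U = \<Union>(S ` K)"
      have fU: "finite U" unfolding U_def using fK K(1) less.prems(2) by auto
      have cU: "card U = card K" using K(4) less.prems(3) K(1) unfolding U_def by (simp add: le_antisym)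
      define S' where "S' = (\<lambda>x. S x - U)"
      have cX': "card (X - K) < card X" by (rule psubset_card_mono) (use K less.prems(1) in auto)
      have hyp: "\<forall>L\<subseteq>X - K. card L \<le> card (\<Union>(S' ` L))"
      proof (intro allI impI)
        fix L assume L: "L \<subseteq> X - K"
        have fL: "finite L" using L less.prems(1) finite_subset by blast
        have eq: "\<Union>(S' ` L) = \<Union>(S ` (L \<union> K)) - U" unfolding S'_def U_def by auto
        have fLK: "finite (\<Union>(S ` (L \<union> K)))" using L K(1) fL fK less.prems(2) by auto
        have sub: "U \<subseteq> \<Union>(S ` (L \<union> K))" unfolding U_def by auto
        have "card (L \<union> K) \<le> card (\<Union>(S ` (L \<union> K)))" using less.prems(3) L K(1) by (metis Diff_subset Un_subset_iff order_trans)
        moreover have "card (L \<union> K) = card L + card K" using L fL fK by (subst card_Un_disjoint) auto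
        moreover have "card (\<Union>(S' ` L)) = card (\<Union>(S ` (L \<union> K))) - card U"
          using eq sub fLK by (simp add: card_Diff_subset fU)
        ultimately show "card L \<le> card (\<Union>(S' ` L))" using cU by linarith
      qed
      have h3: "finite (X - K)" using less.prems(1) by blast
      have h4: "\<forall>x\<in>X - K. finite (S' x)" using less.prems(2) unfolding S'_def by blast
      obtain h where h: "inj_on h (X - K)" "\<forall>x\<in>X - K. h x \<in> S' x"
        using less.hyps[OF cX' h3 h4 hyp] by blast
      define f where "f = (\<lambda>x. if x \<in> K then g x else h x)"
      have "inj_on f X"
      proof (rule inj_onI)
        fix x y assume xy: "x \<in> X" "y \<in> X" "f x = f y"
        show "x = y"
        proof (cases "x \<in> K"; cases "y \<in> K")
          assume "x \<in> K" "y \<in> K" then show ?thesis using xy g(1) unfolding f_def by (auto dest: inj_onD)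
        next
          assume a: "x \<in> K" "y \<notin> K"
          have "f x \<in> U" using a g(2) unfolding f_def U_def by auto
          moreover have "f y \<notin> U" using a h(2) xy(1,2) unfolding f_def S'_def by auto
          ultimately show ?thesis using xy by auto
        next
          assume a: "x \<notin> K" "y \<in> K"
          have "f y \<in> U" using a g(2) unfolding f_def U_def by auto
          moreover have "f x \<notin> U" using a h(2) xy(1,2) unfolding f_def S'_def by auto
          ultimately show ?thesis using xy by auto
        next
          assume "x \<notin> K" "y \<notin> K" then show ?thesis using xy h(1) unfolding f_def by (auto dest: inj_onD)
        qed
      qed
      moreover have "\<forall>x\<in>X. f x \<in> S x" using g h unfolding f_def S'_def by auto
      ultimately show ?thesis by blast
    next
      case False
      then have strict: "\<And>K. K \<subseteq> X \<Longrightarrow> K \<noteq> {} \<Longrightarrow> K \<noteq> X \<Longrightarrow> card K < card (\<Union>(S ` K))"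
        by (meson not_le)
      obtain x where x: "x \<in> X" using Xne by blast
      have "card {x} \<le> card (S x)" using less.prems(3) x by (metis empty_subsetI image_insert image_empty insert_subset ccpo_Sup_singleton)
      then have "S x \<noteq> {}" by auto
      then obtain y where y: "y \<in> S x" by blast
      define S' where "S' = (\<lambda>z. S z - {y})"
      have cX': "card (X - {x}) < card X" using x less.prems(1) by (metis card_Diff1_less)
      have hyp: "\<forall>L\<subseteq>X - {x}. card L \<le> card (\<Union>(S' ` L))"
      proof (intro allI impI)
        fix L assume L: "L \<subseteq> X - {x}"
        show "card L \<le> card (\<Union>(S' ` L))"
        proof (cases "L = {}")
          case True then show ?thesis by simp
        next
          case False
          have "L \<noteq> X" using L x by auto
          have LX: "L \<subseteq> X" using L by blast
          have c1: "card L < card (\<Union>(S ` L))" using strict[of L] LX \<open>L \<noteq> X\<close> False by blast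
          have e1: "\<Union>(S' ` L) = \<Union>(S ` L) - {y}" unfolding S'_def by auto
          have "finite L" using finite_subset[OF LX less.prems(1)] .
          then have f1: "finite (\<Union>(S ` L))" using LX less.prems(2) by auto
          have "card (\<Union>(S ` L)) \<le> card (\<Union>(S ` L) - {y}) + 1"
            using f1 by (cases "y \<in> \<Union>(S ` L)") (simp_all add: card_Diff_singleton)
          then show ?thesis unfolding e1 using c1 by linarith
        qed
      qed
      have h3: "finite (X - {x})" using less.prems(1) by blast
      have h4: "\<forall>z\<in>X - {x}. finite (S' z)" using less.prems(2) unfolding S'_def by blast
      obtain h where h: "inj_on h (X - {x})" "\<forall>z\<in>X - {x}. h z \<in> S' z"
        using less.hyps[OF cX' h3 h4 hyp] by blast
      define f where "f = h(x := y)"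
      have "inj_on f X"
      proof (rule inj_onI)
        fix u v assume uv: "u \<in> X" "v \<in> X" "f u = f v"
        have hne: "\<And>z. z \<in> X - {x} \<Longrightarrow> h z \<noteq> y" using h(2) unfolding S'_def by blast
        show "u = v"
        proof (cases "u = x"; cases "v = x")
          assume "u \<noteq> x" "v \<noteq> x"
          then show ?thesis using uv h(1) unfolding f_def by (auto dest: inj_onD)
        qed (use uv hne in \<open>auto simp: f_def\<close>)
      qed
      moreover have "\<forall>z\<in>X. f z \<in> S z" using h y unfolding f_def S'_def by auto
      ultimately show ?thesis by blast
    qed
  qed
qed

lemma hall_def:
  fixes S :: "'a \<Rightarrow> 'b set"
  assumes "finite X" "\<forall>x\<in>X. finite (S x)" "\<forall>K\<subseteq>X. card K \<le> card (\<Union>(S ` K)) + d"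
  shows "\<exists>Y f. Y \<subseteq> X \<and> inj_on f Y \<and> (\<forall>y\<in>Y. f y \<in> S y) \<and> card X \<le> card Y + d"
proof -
  define S' :: "'a \<Rightarrow> ('b + nat) set" where "S' = (\<lambda>x. Inl ` S x \<union> Inr ` {..<d})"
  have "\<forall>K\<subseteq>X. card K \<le> card (\<Union>(S' ` K))"
  proof (intro allI impI)
    fix K assume K: "K \<subseteq> X"
    show "card K \<le> card (\<Union>(S' ` K))"
    proof (cases "K = {}")
      case True then show ?thesis by simp
    next
      case False
      have e: "\<Union>(S' ` K) = Inl ` (\<Union>(S ` K)) \<union> Inr ` {..<d}" using False unfolding S'_def by auto
      have fK: "finite K" using K assms(1) finite_subset by blast
      have fU: "finite (\<Union>(S ` K))" using fK K assms(2) by auto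
      have "card (\<Union>(S' ` K)) = card (Inl ` (\<Union>(S ` K)) :: ('b + nat) set) + card (Inr ` {..<d} :: ('b + nat) set)"
        unfolding e by (rule card_Un_disjoint) (use fU in auto)
      also have "\<dots> = card (\<Union>(S ` K)) + d" by (simp add: card_image)
      finally show ?thesis using assms(3) K by simp
    qed
  qed
  moreover have "\<forall>x\<in>X. finite (S' x)" using assms(2) unfolding S'_def by auto
  ultimately obtain f where f: "inj_on f X" "\<forall>x\<in>X. f x \<in> S' x" using hall[OF assms(1)] by blast
  define Y where "Y = {x\<in>X. f x \<in> range Inl}"
  define g where "g = (\<lambda>x. projl (f x))"
  have fY: "\<And>x. x \<in> Y \<Longrightarrow> f x = Inl (g x)" unfolding Y_def g_def by auto
  have "inj_on g Y"
  proof (rule inj_onI)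
    fix x y assume "x \<in> Y" "y \<in> Y" "g x = g y"
    then have "f x = f y" using fY by metis
    then show "x = y" using f(1) \<open>x \<in> Y\<close> \<open>y \<in> Y\<close> unfolding Y_def by (auto dest: inj_onD)
  qed
  moreover have "\<forall>y\<in>Y. g y \<in> S y"
  proof
    fix y assume y: "y \<in> Y"
    have "f y \<in> S' y" using f(2) y unfolding Y_def by auto
    then show "g y \<in> S y" using fY[OF y] unfolding S'_def by auto
  qed
  moreover have "card X \<le> card Y + d"
  proof -
    have "f ` (X - Y) \<subseteq> Inr ` {..<d}"
    proof
      fix z assume "z \<in> f ` (X - Y)"
      then obtain x where x: "x \<in> X" "x \<notin> Y" "z = f x" by auto
      then have "f x \<in> S' x" "f x \<notin> range Inl" using f(2) unfolding Y_def by auto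
      then show "z \<in> Inr ` {..<d}" using x unfolding S'_def by auto
    qed
    then have "card (f ` (X - Y)) \<le> d"
      by (metis card_image card_lessThan card_mono finite_imageI finite_lessThan inj_Inr inj_on_subset subset_UNIV)
    moreover have "card (f ` (X - Y)) = card (X - Y)" using f(1) by (meson Diff_subset card_image inj_on_subset)
    moreover have "card X = card Y + card (X - Y)"
    proof -
      have YX: "Y \<subseteq> X" unfolding Y_def by auto
      have fY: "finite Y" using finite_subset[OF YX assms(1)] .
      have "card (X - Y) = card X - card Y" using card_Diff_subset[OF fY YX] .
      moreover have "card Y \<le> card X" using card_mono[OF assms(1) YX] .
      ultimately show ?thesis by linarith
    qed
    ultimately show ?thesis by linarith
  qed
  moreover have "Y \<subseteq> X" unfolding Y_def by auto
  ultimately show ?thesis by blast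
qed

definition Edg :: "nat set list \<Rightarrow> nat set \<Rightarrow> (nat \<times> nat) set" where
  "Edg G L = {(j, c). j \<in> {1..length G} \<and> c \<in> L \<and> c \<in> G ! (j - 1)}"

lemma Edg_finite: "finite L \<Longrightarrow> finite (Edg G L)"
  unfolding Edg_def by (rule finite_subset[of _ "{1..length G} \<times> L"]) auto

lemma mcm_alt: "mcm G L = Max {card M | M. M \<subseteq> Edg G L \<and> inj_on fst M \<and> inj_on snd M}"
  unfolding mcm_def Edg_def by simp

lemma mcm_fin: "finite L \<Longrightarrow> finite {card M | M. M \<subseteq> Edg G L \<and> inj_on fst M \<and> inj_on snd M}"
proof -
  assume "finite L"
  then have "{card M | M. M \<subseteq> Edg G L \<and> inj_on fst M \<and> inj_on snd M} \<subseteq> card ` Pow (Edg G L)" by auto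
  then show ?thesis using Edg_finite[OF \<open>finite L\<close>] finite_subset by blast
qed

lemma mcm_ge:
  assumes "finite L" "X \<subseteq> {1..length G}" "inj_on f X" "\<forall>j\<in>X. f j \<in> L \<and> f j \<in> G ! (j - 1)"
  shows "card X \<le> mcm G L"
proof -
  define M where "M = (\<lambda>j. (j, f j)) ` X"
  have "M \<subseteq> Edg G L" using assms(2,4) unfolding M_def Edg_def by auto
  moreover have "inj_on fst M" unfolding M_def by (auto intro: inj_onI)
  moreover have "inj_on snd M" using assms(3) unfolding M_def inj_on_def by auto
  moreover have "card M = card X" unfolding M_def by (rule card_image) (auto intro: inj_onI)
  ultimately have "card X \<in> {card M | M. M \<subseteq> Edg G L \<and> inj_on fst M \<and> inj_on snd M}"
    by (intro CollectI exI[of _ M]) simp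
  then show ?thesis unfolding mcm_alt using mcm_fin[OF assms(1)] by (rule Max_ge[rotated])
qed

lemma mcm_wit:
  assumes "finite L"
  shows "\<exists>X f. X \<subseteq> {1..length G} \<and> inj_on f X \<and> (\<forall>j\<in>X. f j \<in> L \<and> f j \<in> G ! (j - 1)) \<and> card X = mcm G L"
proof -
  let ?S = "{card M | M. M \<subseteq> Edg G L \<and> inj_on fst M \<and> inj_on snd M}"
  have "card {} \<in> ?S" by (intro CollectI exI[of _ "{}"]) auto
  then have "?S \<noteq> {}" by blast
  then have "Max ?S \<in> ?S" using mcm_fin[OF assms] by (rule Max_in[rotated])
  then obtain M where M0: "Max ?S = card M" "M \<subseteq> Edg G L" "inj_on fst M" "inj_on snd M"
    unfolding mem_Collect_eq by auto
  have M: "M \<subseteq> Edg G L" "inj_on fst M" "inj_on snd M" "card M = mcm G L"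
    using M0 unfolding mcm_alt by auto
  define X where "X = fst ` M"
  define f where "f = (\<lambda>j. snd (the_inv_into M fst j))"
  have inv: "\<And>j. j \<in> X \<Longrightarrow> the_inv_into M fst j \<in> M \<and> fst (the_inv_into M fst j) = j"
    unfolding X_def using M(2) by (auto intro: the_inv_into_into f_the_inv_into_f)
  have "X \<subseteq> {1..length G}" using M(1) unfolding X_def Edg_def by auto
  moreover have "inj_on f X"
  proof (rule inj_onI)
    fix x y assume xy: "x \<in> X" "y \<in> X" "f x = f y"
    then have "the_inv_into M fst x = the_inv_into M fst y"
      using inv M(3) unfolding f_def by (meson inj_onD)
    then show "x = y" using inv xy by metis
  qed
  moreover have "\<forall>j\<in>X. f j \<in> L \<and> f j \<in> G ! (j - 1)"
  proof
    fix j assume j: "j \<in> X"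
    have "(j, f j) \<in> M" using inv[OF j] unfolding f_def by (metis prod.collapse)
    then show "f j \<in> L \<and> f j \<in> G ! (j - 1)" using M(1) unfolding Edg_def by auto
  qed
  moreover have "card X = mcm G L" unfolding X_def using M(2,4) by (simp add: card_image)
  ultimately show ?thesis by (intro exI[of _ X] exI[of _ f]) simp
qed

lemma mcm_upper:
  assumes "finite L" "K \<subseteq> {1..length G}"
  shows "mcm G L + card K \<le> length G + card ((\<Union>j\<in>K. G ! (j - 1)) \<inter> L)"
proof -
  obtain X f where X: "X \<subseteq> {1..length G}" "inj_on f X" "\<forall>j\<in>X. f j \<in> L \<and> f j \<in> G ! (j - 1)"
    "card X = mcm G L" using mcm_wit[OF assms(1), of G] by metis
  have fX: "finite X" using finite_subset[OF X(1)] by simp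
  have "f ` (X \<inter> K) \<subseteq> (\<Union>j\<in>K. G ! (j - 1)) \<inter> L" using X(3) by auto
  moreover have "finite ((\<Union>j\<in>K. G ! (j - 1)) \<inter> L)" using assms(1) by simp
  ultimately have "card (f ` (X \<inter> K)) \<le> card ((\<Union>j\<in>K. G ! (j - 1)) \<inter> L)" by (rule card_mono[rotated])
  moreover have "card (f ` (X \<inter> K)) = card (X \<inter> K)" by (rule card_image, rule inj_on_subset[OF X(2)]) blast
  moreover have "card (X - K) \<le> card ({1..length G} - K)" using X(1) by (intro card_mono) auto
  moreover have "card ({1..length G} - K) = length G - card K"
    using card_Diff_subset[OF finite_subset[OF assms(2) finite_atLeastAtMost] assms(2)] by simp
  moreover have "card K \<le> length G" using card_mono[OF finite_atLeastAtMost assms(2)] by simp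
  moreover have "card X = card (X \<inter> K) + card (X - K)"
  proof -
    have "card X = card ((X \<inter> K) \<union> (X - K))" by (simp add: Int_Diff_Un)
    also have "\<dots> = card (X \<inter> K) + card (X - K)" by (rule card_Un_disjoint) (use fX in auto)
    finally show ?thesis .
  qed
  ultimately show ?thesis using X(4) by linarith
qed

lemma mcm_insert:
  assumes "finite L"
  shows "mcm G (insert i L) \<le> mcm G L + 1"
proof -
  obtain X f where X: "X \<subseteq> {1..length G}" "inj_on f X" "\<forall>j\<in>X. f j \<in> insert i L \<and> f j \<in> G ! (j - 1)"
    "card X = mcm G (insert i L)" using mcm_wit[of "insert i L" G] assms by auto
  have fX: "finite X" using finite_subset[OF X(1)] by simp
  define X' where "X' = {j\<in>X. f j \<noteq> i}"
  have "card X' \<le> mcm G L"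
    by (rule mcm_ge[OF assms]) (use X in \<open>auto simp: X'_def intro: inj_on_subset\<close>)
  moreover have "card (X - X') \<le> 1"
  proof -
    have "f ` (X - X') \<subseteq> {i}" unfolding X'_def by auto
    then have "card (f ` (X - X')) \<le> card {i}" by (intro card_mono) auto
    then have "card (f ` (X - X')) \<le> 1" by simp
    moreover have "card (f ` (X - X')) = card (X - X')" by (rule card_image, rule inj_on_subset[OF X(2)]) blast
    ultimately show ?thesis by simp
  qed
  moreover have "card X = card X' + card (X - X')"
  proof -
    have "X' \<subseteq> X" unfolding X'_def by auto
    then show ?thesis using fX by (metis card_Diff_subset card_mono finite_subset le_add_diff_inverse)
  qed
  ultimately show ?thesis using X(4) by linarith
qed

lemma mcm_hall:
  assumes "finite L" "\<forall>K\<subseteq>{1..length G}. card K \<le> card ((\<Union>j\<in>K. G ! (j - 1)) \<inter> L) + d"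
  shows "length G \<le> mcm G L + d"
proof -
  define S where "S = (\<lambda>j. G ! (j - 1) \<inter> L)"
  have "\<forall>K\<subseteq>{1..length G}. card K \<le> card (\<Union>(S ` K)) + d"
  proof (intro allI impI)
    fix K assume "K \<subseteq> {1..length G}"
    moreover have "\<Union>(S ` K) = (\<Union>j\<in>K. G ! (j - 1)) \<inter> L" unfolding S_def by auto
    ultimately show "card K \<le> card (\<Union>(S ` K)) + d" using assms(2) by simp
  qed
  moreover have "\<forall>x\<in>{1..length G}. finite (S x)" using assms(1) unfolding S_def by simp
  ultimately obtain Y f where Y: "Y \<subseteq> {1..length G}" "inj_on f Y" "\<forall>y\<in>Y. f y \<in> S y"
    "card {1..length G} \<le> card Y + d"
    using hall_def[of "{1..length G}" S d] by auto
  have "card Y \<le> mcm G L" by (rule mcm_ge[OF assms(1) Y(1,2)]) (use Y(3) in \<open>auto simp: S_def\<close>)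
  then show ?thesis using Y(4) by simp
qed

definition umcd_inv :: "nat \<Rightarrow> (nat \<Rightarrow> nat set) \<Rightarrow> nat set \<times> nat set list \<Rightarrow> bool" where
  "umcd_inv m A s \<longleftrightarrow> fst s \<subseteq> {1..m} \<and> (\<forall>j\<in>{1..length (snd s)}. snd s ! (j - 1) \<subseteq> {1..m}) \<and>
    (\<forall>K. K \<subseteq> {1..length (snd s)} \<and> K \<noteq> {} \<longrightarrow> Amin m A + card K \<le> card (\<Union>j\<in>K. snd s ! (j - 1))) \<and>
    (\<forall>i\<in>fst s. mcm (snd s) (insert i (Bset m A i)) \<le> mcm (snd s) (Bset m A i))"

lemma Bset_fin: "finite (Bset m A i)"
  unfolding Bset_def by simp

lemma inv_init: "umcd_inv m A ({1..m}, [])"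
proof -
  have "\<And>L. finite L \<Longrightarrow> mcm [] L = 0" using mcm_upper[of _ "{}" "[]"] by simp
  then show ?thesis unfolding umcd_inv_def using Bset_fin by simp
qed

lemma inv_step:
  assumes ic: "ic_instance m A" and st: "umcd_step m A s s'" and inv: "umcd_inv m A s"
  shows "umcd_inv m A s'"
  using st
proof cases
  case (1 N w G' G N')
  define n where "n = length G"
  define R where "R = insert w (A w)"
  define B where "B = Bset m A w"
  define \<alpha> where "\<alpha> = Amin m A"
  have s: "s = (N, G)" and s': "s' = (N', G')" using 1(1,2) by simp_all
  have I: "N \<subseteq> {1..m} \<and> (\<forall>j\<in>{1..length G}. G ! (j - 1) \<subseteq> {1..m}) \<and>
    (\<forall>K. K \<subseteq> {1..length G} \<and> K \<noteq> {} \<longrightarrow> Amin m A + card K \<le> card (\<Union>j\<in>K. G ! (j - 1))) \<and>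
    (\<forall>i\<in>N. mcm G (insert i (Bset m A i)) \<le> mcm G (Bset m A i))"
    using inv unfolding s umcd_inv_def fst_conv snd_conv .
  have Nm: "N \<subseteq> {1..m}" using I by blast
  have rows: "\<forall>j\<in>{1..n}. G ! (j - 1) \<subseteq> {1..m}" using I unfolding n_def by blast
  have T: "\<And>K. K \<subseteq> {1..n} \<Longrightarrow> K \<noteq> {} \<Longrightarrow> \<alpha> + card K \<le> card (\<Union>j\<in>K. G ! (j - 1))"
    using I unfolding n_def \<alpha>_def by blast
  have cl: "\<forall>i\<in>N. mcm G (insert i (Bset m A i)) \<le> mcm G (Bset m A i)"
    using I by blast
  have wm: "w \<in> {1..m}" using 1(4) Nm by auto
  have Aw: "A w \<subseteq> {1..m} - {w}" using ic wm unfolding ic_instance_def by auto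
  have fAw: "finite (A w)" using finite_subset[OF Aw] by simp
  have wA: "w \<notin> A w" using Aw by auto
  have cR: "card R = card (A w) + 1" unfolding R_def using wA fAw by simp
  have Rm: "R \<subseteq> {1..m}" unfolding R_def using Aw wm by auto
  have al: "\<alpha> \<le> card (A w)" unfolding \<alpha>_def Amin_def using wm by (intro Min_le) auto
  have G': "G' = G @ [R]" using 1 unfolding R_def by simp
  have lG': "length G' = n + 1" using G' n_def by simp
  have nth1: "\<And>j. j \<in> {1..n} \<Longrightarrow> G' ! (j - 1) = G ! (j - 1)" using G' n_def by (auto simp: nth_append)
  have nth2: "G' ! (n + 1 - 1) = R" using G' n_def by simp
  have N'N: "N' \<subseteq> N" using 1 by auto
  have part1: "N' \<subseteq> {1..m}" using N'N Nm by auto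
  have part2: "\<forall>j\<in>{1..length G'}. G' ! (j - 1) \<subseteq> {1..m}"
  proof
    fix j assume j: "j \<in> {1..length G'}"
    show "G' ! (j - 1) \<subseteq> {1..m}"
    proof (cases "j = n + 1")
      case True then show ?thesis using nth2 Rm by simp
    next
      case False then have "j \<in> {1..n}" using j lG' by auto
      then show ?thesis using nth1 rows by auto
    qed
  qed
  have part4: "\<forall>i\<in>N'. mcm G' (insert i (Bset m A i)) \<le> mcm G' (Bset m A i)"
  proof
    fix i assume i: "i \<in> N'"
    have "\<not> (mcm G' (insert i (Bset m A i)) = mcm G' (Bset m A i) + 1)" using i 1 by auto
    moreover have "mcm G' (insert i (Bset m A i)) \<le> mcm G' (Bset m A i) + 1"
      by (rule mcm_insert[OF Bset_fin])
    ultimately show "mcm G' (insert i (Bset m A i)) \<le> mcm G' (Bset m A i)" by linarith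
  qed
  have part3: "\<forall>K. K \<subseteq> {1..length G'} \<and> K \<noteq> {} \<longrightarrow> \<alpha> + card K \<le> card (\<Union>j\<in>K. G' ! (j - 1))"
  proof (intro allI impI)
    fix K assume K: "K \<subseteq> {1..length G'} \<and> K \<noteq> {}"
    show "\<alpha> + card K \<le> card (\<Union>j\<in>K. G' ! (j - 1))"
    proof (cases "n + 1 \<in> K")
      case False
      then have Kn: "K \<subseteq> {1..n}" using K lG' by (auto simp: subset_iff le_Suc_eq)
      then have "(\<Union>j\<in>K. G' ! (j - 1)) = (\<Union>j\<in>K. G ! (j - 1))" using nth1 by (auto simp: subset_iff)
      then show ?thesis using T[OF Kn] K by simp
    next
      case True
      define K' where "K' = K - {n + 1}"
      have K'n: "K' \<subseteq> {1..n}" using K lG' unfolding K'_def by (auto simp: subset_iff le_Suc_eq)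
      have fK': "finite K'" using finite_subset[OF K'n] by simp
      have cK: "card K = card K' + 1"
      proof -
        have "K = insert (n + 1) K'" "n + 1 \<notin> K'" using True unfolding K'_def by auto
        then show ?thesis using fK' by (metis card_insert_disjoint Suc_eq_plus1)
      qed
      have UK: "(\<Union>j\<in>K. G' ! (j - 1)) = R \<union> (\<Union>j\<in>K'. G ! (j - 1))"
      proof -
        have "K = insert (n + 1) K'" using True unfolding K'_def by auto
        then have "(\<Union>j\<in>K. G' ! (j - 1)) = G' ! (n + 1 - 1) \<union> (\<Union>j\<in>K'. G' ! (j - 1))" by simp
        also have "(\<Union>j\<in>K'. G' ! (j - 1)) = (\<Union>j\<in>K'. G ! (j - 1))" using nth1 K'n by (auto simp: subset_iff)
        finally show ?thesis using nth2 by simp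
      qed
      define U where "U = (\<Union>j\<in>K'. G ! (j - 1))"
      have Um: "U \<subseteq> {1..m}" using rows K'n unfolding U_def by auto
      have RUm: "R \<union> U \<subseteq> {1..m}" using Um Rm by auto
      have fin_all: "finite (R \<union> U)" using finite_subset[OF RUm] by simp
      show ?thesis
      proof (cases "K' = {}")
        case True
        then have "card K = 1" using cK by simp
        moreover have "card R \<le> card (\<Union>j\<in>K. G' ! (j - 1))" unfolding UK using fin_all unfolding U_def by (intro card_mono) auto
        ultimately show ?thesis using cR al by linarith
      next
        case K'ne: False
        have fB: "finite B" unfolding B_def by (rule Bset_fin)
        have H1: "mcm G B + card K' \<le> n + card (U \<inter> B)"
          using mcm_upper[OF fB, of K' G] K'n unfolding U_def n_def by simp
        have H2: "mcm G (insert w B) \<le> mcm G B" using cl 1 unfolding B_def by auto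
        have H3: "n \<le> mcm G (insert w B) + (card (A w) - \<alpha>)"
          unfolding n_def
        proof (rule mcm_hall)
          show "finite (insert w B)" using fB by simp
          show "\<forall>K\<subseteq>{1..length G}. card K \<le> card ((\<Union>j\<in>K. G ! (j - 1)) \<inter> insert w B) + (card (A w) - \<alpha>)"
          proof (intro allI impI)
            fix L assume L: "L \<subseteq> {1..length G}"
            show "card L \<le> card ((\<Union>j\<in>L. G ! (j - 1)) \<inter> insert w B) + (card (A w) - \<alpha>)"
            proof (cases "L = {}")
              case True then show ?thesis by simp
            next
              case False
              define V where "V = (\<Union>j\<in>L. G ! (j - 1))"
              have Ln: "L \<subseteq> {1..n}" using L n_def by simp
              have TV: "\<alpha> + card L \<le> card V" using T[OF Ln False] unfolding V_def .
              have Vm: "V \<subseteq> {1..m}" using rows Ln unfolding V_def by auto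
              have "V \<subseteq> (V \<inter> insert w B) \<union> A w" using Vm unfolding B_def Bset_def by auto
              moreover have "finite ((V \<inter> insert w B) \<union> A w)"
                using fAw finite_subset[OF Vm] by simp
              ultimately have "card V \<le> card ((V \<inter> insert w B) \<union> A w)"
                by (intro card_mono)
              also have "\<dots> \<le> card (V \<inter> insert w B) + card (A w)" by (rule card_Un_le)
              finally show ?thesis using TV al unfolding V_def by linarith
            qed
          qed
        qed
        have H4: "card R + card (U \<inter> B) \<le> card (\<Union>j\<in>K. G' ! (j - 1))"
        proof -
          have "R \<inter> (U \<inter> B) = {}" unfolding R_def B_def Bset_def by auto
          then have "card (R \<union> (U \<inter> B)) = card R + card (U \<inter> B)"
            using fin_all by (intro card_Un_disjoint) auto
          moreover have "card (R \<union> (U \<inter> B)) \<le> card (R \<union> U)" using fin_all by (intro card_mono) auto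
          ultimately show ?thesis unfolding UK U_def by simp
        qed
        show ?thesis using H1 H2 H3 H4 cK cR al by linarith
      qed
    qed
  qed
  show ?thesis unfolding umcd_inv_def s' using part1 part2 part3 part4 unfolding \<alpha>_def by auto
qed

lemma inv_reach:
  assumes "ic_instance m A" "(umcd_step m A)\<^sup>*\<^sup>* s0 s" "umcd_inv m A s0"
  shows "umcd_inv m A s"
  using assms(2,3) by (induction rule: rtranclp_induct) (auto intro: inv_step[OF assms(1)])

theorem lemma3:
  fixes m :: nat and A :: "nat \<Rightarrow> nat set" and G :: "nat set list" and K :: "nat set"
  assumes "ic_instance m A"
    and "umcd_output m A G"
    and "K \<subseteq> {1..length G}" and "K \<noteq> {}"
  shows "card (\<Union>j\<in>K. G ! (j - 1)) \<ge> Amin m A + card K"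
proof -
  have "umcd_inv m A ({}, G)"
    using inv_reach[OF assms(1) assms(2)[unfolded umcd_output_def] inv_init] .
  then show ?thesis using assms(3,4) unfolding umcd_inv_def by auto
qed

end
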